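(* Let $f(w)=\sum_{n=0}^{\infty}a_nw^n$ be an entire function of order $\rho$ with $0\le\rho<1$. Then for every $z\in\mathbb{C}-f^{-1}(f(0))$ and every $n\in\mathbb{Z}^+$, $$a_n=(-1)^n\big(f(0)-f(z)\big)\sum_{0\le i_1<i_2<\cdots<i_n}\Big(\prod_{j=1}^n\phi_{0i_j}(z)\Big)^{-1}.$$
   Context: ${\rm Aut}(f)=\{\phi_{0n}\}_n$ denotes the automorphic functions of $f$ (branches of $f^{-1}\circ f$, solutions of $f(\phi(z))=f(z)$); for fixed $z$, $\{\phi_{0n}(z)\}_{n\ge 0}$ is the set of zeros of $w\mapsto f(w)-f(z)$ listed with multiplicity (all nonzero when $f(z)\ne f(0)$). *)

theory Defs
  imports "HOL-Complex_Analysis.Complex_Analysis"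
begin

definition entire_order :: "(complex \<Rightarrow> complex) \<Rightarrow> ereal" where
  "entire_order f = Inf {ereal \<rho> | \<rho>. \<rho> \<ge> 0 \<and>
      (\<forall>\<^sub>F r in at_top. \<forall>w. norm w = r \<longrightarrow> norm (f w) \<le> exp (r powr \<rho>))}"

text \<open>phi (restricted to the index set I, an initial segment of nat) lists the
  zeros of w \<mapsto> f w - f z with multiplicity: these are the values
  phi_{0n}(z) of the automorphic functions of f at z.\<close>
definition zeros_enum ::
    "(complex \<Rightarrow> complex) \<Rightarrow> complex \<Rightarrow> nat set \<Rightarrow> (nat \<Rightarrow> complex) \<Rightarrow> bool" where
  "zeros_enum f z I \<phi> \<longleftrightarrow>
     (I = UNIV \<or> (\<exists>N. I = {..<N})) \<and>
     (\<forall>w. finite {k\<in>I. \<phi> k = w} \<and>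
          card {k\<in>I. \<phi> k = w} =
            (if f w = f z then nat (zorder (\<lambda>u. f u - f z) w) else 0))"

end

theory Submission
  imports Defs
begin

lemma div_step:
  fixes g :: "complex \<Rightarrow> complex"
  assumes hol: "g holomorphic_on UNIV" and ga: "g a = 0" and g0: "g 0 \<noteq> 0"
  shows "\<exists>G. G holomorphic_on UNIV \<and> (\<forall>w. g w = (1 - w / a) * G w) \<and> G 0 = g 0 \<and>
           (\<forall>b. zorder G b = zorder g b - (if b = a then 1 else 0))"
proof -
  have a0: "a \<noteq> 0" using ga g0 by auto
  define F where "F = (\<lambda>z. if z = a then deriv g a else (g z - g a) / (z - a))"
  have Fh: "F holomorphic_on UNIV" unfolding F_def by (rule pole_lemma[OF hol]) auto
  define G where "G = (\<lambda>w. - a * F w)"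
  have Gh: "G holomorphic_on UNIV" unfolding G_def by (intro holomorphic_intros Fh)
  have geq: "g w = (1 - w / a) * G w" for w
  proof (cases "w = a")
    case True thus ?thesis using ga a0 by simp
  next
    case False thus ?thesis using a0 ga by (simp add: G_def F_def field_simps)
  qed
  have G0: "G 0 = g 0" using a0 ga by (simp add: G_def F_def field_simps)
  have ev: "eventually (\<lambda>w. g w \<noteq> 0) (at b)" for b
    using non_zero_neighbour_alt[OF hol open_UNIV connected_UNIV, of b 0] g0
    by (auto elim: eventually_mono)
  have zo: "zorder G b = zorder g b - (if b = a then 1 else 0)" for b
  proof -
    have "zorder g b = zorder (\<lambda>w. (1 - w / a) * G w) b"
      using geq by (metis)
    also have "\<dots> = zorder (\<lambda>w. 1 - w / a) b + zorder G b"
    proof (rule zorder_times_analytic)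
      show "(\<lambda>w. 1 - w / a) analytic_on {b}" using a0 by (intro analytic_intros) auto
      show "G analytic_on {b}" using Gh analytic_on_holomorphic by blast
      show "\<forall>\<^sub>F w in at b. (1 - w / a) * G w \<noteq> 0" using ev[of b] geq by (auto elim: eventually_mono)
    qed
    also have "zorder (\<lambda>w. 1 - w / a) b = (if b = a then 1 else 0)"
    proof (cases "b = a")
      case True
      have "zorder (\<lambda>w. 1 - w / a) a = 1"
        apply (rule zorder_eqI[where S=UNIV and g="\<lambda>_. - 1 / a"])
        using a0 by (auto simp: field_simps)
      thus ?thesis using True by simp
    next
      case False
      have "zorder (\<lambda>w. 1 - w / a) b = 0"
        apply (rule zorder_eq_0I) using False a0 by (auto intro!: analytic_intros simp: field_simps)
      thus ?thesis using False by simp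
    qed
    finally show ?thesis by simp
  qed
  show ?thesis using Gh geq G0 zo by blast
qed

lemma card_insert_filter:
  assumes "finite K" "j \<notin> K"
  shows "card {k\<in>insert j K. \<psi> k = a} = card {k\<in>K. \<psi> k = a} + (if \<psi> j = a then 1 else 0)"
proof (cases "\<psi> j = a")
  case True
  have "{k\<in>insert j K. \<psi> k = a} = insert j {k\<in>K. \<psi> k = a}" using True by auto
  thus ?thesis using assms True by simp
next
  case False
  have "{k\<in>insert j K. \<psi> k = a} = {k\<in>K. \<psi> k = a}" using False by auto
  thus ?thesis using False by simp
qed

lemma div_finite:
  fixes g :: "complex \<Rightarrow> complex" and \<psi> :: "nat \<Rightarrow> complex"
  assumes "finite K" "g holomorphic_on UNIV" "g 0 \<noteq> 0"
    "\<And>a. int (card {k\<in>K. \<psi> k = a}) \<le> zorder g a"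
  shows "\<exists>H. H holomorphic_on UNIV \<and> (\<forall>w. g w = H w * (\<Prod>k\<in>K. (1 - w / \<psi> k))) \<and> H 0 = g 0 \<and>
     (\<forall>a. zorder H a = zorder g a - int (card {k\<in>K. \<psi> k = a}))"
  using assms(1,2,3,4)
proof (induction K arbitrary: g rule: finite_induct)
  case empty
  thus ?case by auto
next
  case (insert j K)
  have cj: "card {k\<in>insert j K. \<psi> k = a} = card {k\<in>K. \<psi> k = a} + (if \<psi> j = a then 1 else 0)" for a
    by (rule card_insert_filter) (use insert in auto)
  have "1 \<le> zorder g (\<psi> j)" using insert.prems(3)[of "\<psi> j"] cj[of "\<psi> j"] by simp
  hence gj: "g (\<psi> j) = 0"
    using zorder_eq_0I[of g "\<psi> j"] insert.prems(1) analytic_on_holomorphic by fastforce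
  obtain G where G: "G holomorphic_on UNIV" "\<forall>w. g w = (1 - w / \<psi> j) * G w" "G 0 = g 0"
     "\<forall>b. zorder G b = zorder g b - (if b = \<psi> j then 1 else 0)"
    using div_step[OF insert.prems(1) gj insert.prems(2)] by blast
  have "\<forall>a. int (card {k\<in>K. \<psi> k = a}) \<le> zorder G a"
  proof
    fix a show "int (card {k\<in>K. \<psi> k = a}) \<le> zorder G a"
      using insert.prems(3)[of a] cj[of a] G(4) by (auto split: if_splits)
  qed
  then obtain H where H: "H holomorphic_on UNIV" "\<forall>w. G w = H w * (\<Prod>k\<in>K. (1 - w / \<psi> k))" "H 0 = G 0"
     "\<forall>a. zorder H a = zorder G a - int (card {k\<in>K. \<psi> k = a})"
    using insert.IH[OF G(1)] G(3) insert.prems(2) by auto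
  show ?case
  proof (intro exI conjI allI)
    show "H holomorphic_on UNIV" by fact
    show "g w = H w * (\<Prod>k\<in>insert j K. (1 - w / \<psi> k))" for w
      using G(2) H(2) insert.hyps by (simp add: mult_ac)
    show "H 0 = g 0" using H(3) G(3) by simp
    show "zorder H a = zorder g a - int (card {k\<in>insert j K. \<psi> k = a})" for a
      using H(4) G(4) cj[of a] by (auto split: if_splits)
  qed
qed

lemma maxmod_disc:
  fixes h :: "complex \<Rightarrow> complex"
  assumes "h holomorphic_on UNIV" "r > 0" "\<And>w. norm w = r \<Longrightarrow> norm (h w) \<le> B" "norm w \<le> r"
  shows "norm (h w) \<le> B"
proof (rule maximum_modulus_frontier[of h "cball 0 r"])
  show "h holomorphic_on interior (cball 0 r)" using assms(1) by (auto intro: holomorphic_on_subset)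
  show "continuous_on (closure (cball 0 r)) h"
    using assms(1) holomorphic_on_imp_continuous_on continuous_on_subset by blast
qed (use assms in auto)

lemma norm_le_reflect:
  fixes x :: complex
  assumes "Re x \<le> A" "A > 0"
  shows "norm x \<le> norm (2 * of_real A - x)"
proof -
  have "norm x ^ 2 \<le> norm (2 * of_real A - x) ^ 2"
    unfolding cmod_power2 using assms by (simp add: power2_eq_square algebra_simps)
  thus ?thesis by (rule power2_le_imp_le) simp
qed

lemma schwarz_bound:
  fixes L :: "complex \<Rightarrow> complex"
  assumes hol: "L holomorphic_on ball 0 R" and R: "R \<ge> 4" and L0: "L 0 = 0" and A: "A > 0"
    and re: "\<And>w. w \<in> ball 0 R \<Longrightarrow> Re (L w) \<le> A" and w: "norm w \<le> 1"
  shows "norm (L w) \<le> 8 * A / R"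
proof -
  have den: "2 * of_real A - L u \<noteq> 0" if "u \<in> ball 0 R" for u
  proof
    assume "2 * of_real A - L u = 0"
    hence "Re (2 * of_real A - L u) = 0" by simp
    thus False using re[OF that] A by simp
  qed
  define \<psi> where "\<psi> = (\<lambda>u. L u / (2 * of_real A - L u))"
  have \<psi>h: "\<psi> holomorphic_on ball 0 R" unfolding \<psi>_def using den by (intro holomorphic_intros hol) auto
  have \<psi>b: "norm (\<psi> u) \<le> 1" if "u \<in> ball 0 R" for u
    using norm_le_reflect[OF re[OF that] A] den[OF that] by (simp add: \<psi>_def norm_divide divide_le_eq_1)
  have \<psi>0: "\<psi> 0 = 0" by (simp add: \<psi>_def L0)
  define chi where "chi = (\<lambda>u. if u = 0 then deriv \<psi> 0 else (\<psi> u - \<psi> 0) / (u - 0))"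
  have chih: "chi holomorphic_on ball 0 R" unfolding chi_def
    by (rule pole_lemma[OF \<psi>h]) (use R in auto)
  have chib: "norm (chi w) \<le> 2 / R"
  proof (rule maximum_modulus_frontier[of chi "cball 0 (R/2)"])
    have sub: "cball 0 (R/2) \<subseteq> ball 0 R" using R by auto
    show "chi holomorphic_on interior (cball 0 (R / 2))"
      using chih sub ball_subset_cball by (metis interior_cball holomorphic_on_subset subset_trans)
    show "continuous_on (closure (cball 0 (R / 2))) chi"
      using chih sub holomorphic_on_imp_continuous_on continuous_on_subset by (metis closed_cball closure_closed)
    show "norm (chi u) \<le> 2 / R" if "u \<in> frontier (cball 0 (R / 2))" for u
    proof -
      have u: "norm u = R / 2" using that R by auto
      hence "u \<noteq> 0" "u \<in> ball 0 R" using R by auto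
      hence "norm (chi u) = norm (\<psi> u) / (R/2)" using u by (simp add: chi_def \<psi>0 norm_divide field_simps)
      also have "\<dots> \<le> 1 / (R/2)" using \<psi>b[OF \<open>u \<in> ball 0 R\<close>] R by (intro divide_right_mono) auto
      finally show ?thesis by simp
    qed
  qed (use w R in auto)
  have \<psi>w: "norm (\<psi> w) \<le> 2 / R"
  proof (cases "w = 0")
    case True thus ?thesis using \<psi>0 R by simp
  next
    case False
    hence "\<psi> w = w * chi w" by (simp add: chi_def \<psi>0)
    hence "norm (\<psi> w) = norm w * norm (chi w)" by (simp add: norm_mult)
    also have "\<dots> \<le> 1 * (2 / R)" using w chib by (intro mult_mono) auto
    finally show ?thesis by simp
  qed
  have wb: "w \<in> ball 0 R" using w R by auto
  have "\<psi> w * (2 * of_real A - L w) = L w" using den[OF wb] by (simp add: \<psi>_def)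
  hence eq: "L w * (1 + \<psi> w) = 2 * of_real A * \<psi> w" by (simp add: algebra_simps)
  have "norm (1 + \<psi> w) \<ge> 1 / 2"
  proof -
    have "1 - norm (\<psi> w) \<le> norm (1 + \<psi> w)"
      using norm_triangle_ineq2[of 1 "- \<psi> w"] by (simp add: norm_minus_commute)
    moreover have "2 / R \<le> 1/2" using R by (simp add: field_simps)
    hence "norm (\<psi> w) \<le> 1/2" using \<psi>w by linarith
    ultimately show ?thesis by simp
  qed
  have "norm (L w) * (1/2) \<le> norm (L w) * norm (1 + \<psi> w)"
    by (intro mult_left_mono) (use \<open>norm (1 + \<psi> w) \<ge> 1 / 2\<close> in auto)
  also have "\<dots> = 2 * A * norm (\<psi> w)" using eq A by (metis norm_mult norm_of_real abs_of_pos norm_numeral mult.assoc)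
  also have "\<dots> \<le> 2 * A * (2 / R)" using \<psi>w A by (intro mult_left_mono) auto
  finally show ?thesis using R by (simp add: field_simps)
qed

definition esym :: "nat set \<Rightarrow> nat \<Rightarrow> (nat \<Rightarrow> 'a::comm_ring_1) \<Rightarrow> 'a" where
  "esym K n b = (\<Sum>S\<in>{S. S \<subseteq> K \<and> card S = n}. \<Prod>k\<in>S. b k)"

lemma prod_neg_X_const:
  fixes c :: "nat \<Rightarrow> 'a::comm_ring_1"
  shows "(\<Prod>k\<in>S. - (fps_X * fps_const (c k))) = fps_const ((-1) ^ card S * (\<Prod>k\<in>S. c k)) * fps_X ^ card S"
proof (induction S rule: infinite_finite_induct)
  case (insert x F)
  define m where "m = card F"
  define p where "p = (\<Prod>k\<in>F. c k)"
  have e0: "fps_const (- c x) = - fps_const (c x)" by (rule fps_const_neg[symmetric])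
  have e1: "- (fps_X * fps_const (c x)) = fps_const (- c x) * fps_X" by (simp only: e0 mult_minus_left mult_minus_right mult.commute)
  have "(\<Prod>k\<in>insert x F. - (fps_X * fps_const (c k))) =
        (fps_const (- c x) * fps_X) * (fps_const ((-1) ^ m * p) * fps_X ^ m)"
  proof -
    have "(\<Prod>k\<in>insert x F. - (fps_X * fps_const (c k))) = - (fps_X * fps_const (c x)) * (\<Prod>k\<in>F. - (fps_X * fps_const (c k)))"
      using insert(1,2) by (rule prod.insert)
    thus ?thesis using insert(3) by (simp only: e1 m_def p_def)
  qed
  also have "\<dots> = (fps_const (- c x) * fps_const ((-1) ^ m * p)) * (fps_X * fps_X ^ m)"
    by (simp only: ac_simps)
  also have "\<dots> = fps_const ((-1) ^ Suc m * (c x * p)) * fps_X ^ Suc m"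
    by (simp only: fps_const_mult power_Suc) (simp add: algebra_simps)
  finally show ?case using insert by (simp add: m_def p_def)
qed auto

lemma const_X_pow_nth: "fps_nth (fps_const c * fps_X ^ m) n = (if n = m then c else 0)"
  by (simp add: fps_X_power_nth)

lemma fps_prod_lin:
  fixes b :: "nat \<Rightarrow> 'a::comm_ring_1"
  assumes "finite K"
  shows "fps_nth (\<Prod>k\<in>K. (1 - fps_X * fps_const (b k))) n = (-1) ^ n * esym K n b"
proof -
  have "(\<Prod>k\<in>K. (1 - fps_X * fps_const (b k))) = (\<Prod>k\<in>K. (- (fps_X * fps_const (b k))) + 1)"
    by simp
  also have "\<dots> = (\<Sum>S\<in>Pow K. (\<Prod>k\<in>S. - (fps_X * fps_const (b k))) * (\<Prod>k\<in>K-S. 1))"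
    by (rule prod_add[OF assms])
  also have "\<dots> = (\<Sum>S\<in>Pow K. fps_const ((-1) ^ card S * (\<Prod>k\<in>S. b k)) * fps_X ^ card S)"
    by (simp add: prod_neg_X_const)
  finally have "fps_nth (\<Prod>k\<in>K. (1 - fps_X * fps_const (b k))) n =
      (\<Sum>S\<in>Pow K. fps_nth (fps_const ((-1) ^ card S * (\<Prod>k\<in>S. b k)) * fps_X ^ card S) n)"
    by (simp only: fps_sum_nth)
  also have "\<dots> = (\<Sum>S\<in>Pow K. (if n = card S then (-1) ^ card S * (\<Prod>k\<in>S. b k) else 0))"
    by (rule sum.cong) (simp_all only: const_X_pow_nth)
  also have "\<dots> = (\<Sum>S\<in>Pow K. if card S = n then (-1) ^ n * (\<Prod>k\<in>S. b k) else 0)"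
    by (rule sum.cong) auto
  also have "\<dots> = (\<Sum>S\<in>{S\<in>Pow K. card S = n}. (-1) ^ n * (\<Prod>k\<in>S. b k))"
    using assms by (simp only: sum.inter_filter finite_Pow_iff)
  also have "{S\<in>Pow K. card S = n} = {S. S \<subseteq> K \<and> card S = n}" by auto
  also have "(\<Sum>S\<in>{S. S \<subseteq> K \<and> card S = n}. (-1) ^ n * (\<Prod>k\<in>S. b k)) = (-1) ^ n * esym K n b"
    unfolding esym_def by (rule sum_distrib_left[symmetric])
  finally show ?thesis .
qed

lemma pow_sum_le_exp:
  fixes x :: "nat \<Rightarrow> real"
  assumes "finite K" "\<And>k. k \<in> K \<Longrightarrow> x k \<ge> 0" "F \<subseteq> Pow K"
  shows "(\<Sum>S\<in>F. \<Prod>k\<in>S. x k) \<le> exp (\<Sum>k\<in>K. x k)"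
proof -
  have "(\<Sum>S\<in>F. \<Prod>k\<in>S. x k) \<le> (\<Sum>S\<in>Pow K. \<Prod>k\<in>S. x k)"
    using assms by (intro sum_mono2) (auto intro!: prod_nonneg)
  also have "\<dots> = (\<Sum>S\<in>Pow K. (\<Prod>k\<in>S. x k) * (\<Prod>k\<in>K-S. 1))" by simp
  also have "\<dots> = (\<Prod>k\<in>K. x k + 1)" by (rule prod_add[OF assms(1), symmetric])
  also have "\<dots> \<le> (\<Prod>k\<in>K. exp (x k))"
    using assms by (intro prod_mono) (auto simp: add.commute exp_ge_add_one_self)
  also have "\<dots> = exp (\<Sum>k\<in>K. x k)" by (simp add: exp_sum assms(1))
  finally show ?thesis .
qed

lemma esym_norm_le:
  fixes b :: "nat \<Rightarrow> complex"
  assumes "finite K"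
  shows "norm (esym K n b) \<le> exp (\<Sum>k\<in>K. norm (b k))"
proof -
  have "norm (esym K n b) \<le> (\<Sum>S\<in>{S. S \<subseteq> K \<and> card S = n}. \<Prod>k\<in>S. norm (b k))"
    unfolding esym_def by (rule order_trans[OF norm_sum]) (simp only: prod_norm order.refl)
  also have "\<dots> \<le> exp (\<Sum>k\<in>K. norm (b k))" by (rule pow_sum_le_exp) (use assms in auto)
  finally show ?thesis .
qed

locale thm17 =
  fixes f :: "complex \<Rightarrow> complex" and a :: "nat \<Rightarrow> complex"
    and z :: complex and I :: "nat set" and \<phi> :: "nat \<Rightarrow> complex"
  assumes holo: "f holomorphic_on UNIV"
    and sums: "\<And>w. (\<lambda>k. a k * w ^ k) sums f w"
    and ord: "entire_order f < 1"
    and fz: "f z \<noteq> f 0"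
    and ze: "zeros_enum f z I \<phi>"
begin

definition g where "g w = f w - f z"
definition c where "c = f 0 - f z"

lemma g_holo: "g holomorphic_on UNIV"
  unfolding g_def[abs_def] by (intro holomorphic_intros holo)

lemma c_nz: "c \<noteq> 0" using fz by (simp add: c_def)
lemma g0: "g 0 = c" by (simp add: g_def c_def)

lemma g_eq: "(\<lambda>u. f u - f z) = g" by (simp add: g_def[abs_def])

lemma fin_count: "finite {k\<in>I. \<phi> k = w}"
  using ze by (simp add: zeros_enum_def)

lemma count_eq: "card {k\<in>I. \<phi> k = w} = (if g w = 0 then nat (zorder g w) else 0)"
  using ze by (simp add: zeros_enum_def g_eq g_def)

lemma zero_phi: assumes "k \<in> I" shows "g (\<phi> k) = 0"
proof (rule ccontr)
  assume "g (\<phi> k) \<noteq> 0"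
  hence "card {k'\<in>I. \<phi> k' = \<phi> k} = 0" using count_eq by simp
  moreover have "k \<in> {k'\<in>I. \<phi> k' = \<phi> k}" using assms by simp
  ultimately show False using fin_count[of "\<phi> k"] card_0_eq by blast
qed

lemma phi_nz: "k \<in> I \<Longrightarrow> \<phi> k \<noteq> 0"
  by (metis zero_phi g0 c_nz)

lemma g_ev_nz: "eventually (\<lambda>w. g w \<noteq> 0) (at b)"
  using non_zero_neighbour_alt[OF g_holo open_UNIV connected_UNIV, of b 0] g0 c_nz
  by (auto elim: eventually_mono)

lemma zorder_g_pos: "g w = 0 \<Longrightarrow> zorder g w > 0"
  using zorder_pos_iff[OF g_holo open_UNIV, of w] g_ev_nz[of w] eventually_frequently[of "at w"] by auto

lemma zorder_g_0: "g w \<noteq> 0 \<Longrightarrow> zorder g w = 0"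
  using zorder_eq_0I[of g w] g_holo analytic_on_holomorphic by blast

lemma card_le: assumes "K \<subseteq> I" shows "int (card {k\<in>K. \<phi> k = w}) \<le> zorder g w"
proof -
  have "card {k\<in>K. \<phi> k = w} \<le> card {k\<in>I. \<phi> k = w}"
    using assms fin_count by (intro card_mono) auto
  thus ?thesis using count_eq[of w] zorder_g_pos[of w] zorder_g_0[of w] by (auto split: if_splits)
qed

lemma card_exact:
  assumes "{k\<in>I. \<phi> k = w} \<subseteq> K" "K \<subseteq> I" "g w = 0"
  shows "int (card {k\<in>K. \<phi> k = w}) = zorder g w"
proof -
  have "{k\<in>K. \<phi> k = w} = {k\<in>I. \<phi> k = w}" using assms by auto
  thus ?thesis using count_eq[of w] zorder_g_pos[of w] assms(3) by simp
qed

lemma growth: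
  obtains \<sigma> R0 where "0 \<le> \<sigma>" "\<sigma> < 1" "R0 > 0"
    "\<And>w. norm w \<ge> R0 \<Longrightarrow> norm (g w) \<le> exp (norm w powr \<sigma>) + norm (f z)"
proof -
  from ord obtain x where x: "x \<in> {ereal \<rho> | \<rho>. \<rho> \<ge> 0 \<and>
      (\<forall>\<^sub>F r in at_top. \<forall>w. norm w = r \<longrightarrow> norm (f w) \<le> exp (r powr \<rho>))}" "x < 1"
    unfolding entire_order_def Inf_less_iff by blast
  then obtain \<rho> where \<rho>: "x = ereal \<rho>" "\<rho> \<ge> 0"
    "\<forall>\<^sub>F r in at_top. \<forall>w. norm w = r \<longrightarrow> norm (f w) \<le> exp (r powr \<rho>)" by blast
  from \<rho>(3) obtain N where N: "\<And>r. r \<ge> N \<Longrightarrow> \<forall>w. norm w = r \<longrightarrow> norm (f w) \<le> exp (r powr \<rho>)"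
    by (auto simp: eventually_at_top_linorder)
  show ?thesis
  proof (rule that[of \<rho> "max N 1"])
    show "\<rho> < 1" using x(2) \<rho>(1) by simp
    fix w :: complex assume "norm w \<ge> max N 1"
    hence "norm (f w) \<le> exp (norm w powr \<rho>)" using N[of "norm w"] by auto
    moreover have "norm (g w) \<le> norm (f w) + norm (f z)" unfolding g_def by (rule norm_triangle_ineq4)
    ultimately show "norm (g w) \<le> exp (norm w powr \<rho>) + norm (f z)" by linarith
  qed (use \<rho> in auto)
qed

lemma delta:
  obtains \<delta> where "0 < \<delta>" "\<delta> \<le> 1" "\<And>k. k \<in> I \<Longrightarrow> norm (\<phi> k) \<ge> \<delta>"
proof -
  have "isCont g 0" using g_holo holomorphic_on_imp_continuous_on continuous_on_eq_continuous_at by blast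
  then obtain e where e: "e > 0" "\<And>y. dist 0 y < e \<Longrightarrow> g y \<noteq> 0"
    using continuous_at_avoid[of 0 g 0] g0 c_nz by auto
  show ?thesis
  proof (rule that[of "min e 1"])
    fix k assume "k \<in> I"
    hence "g (\<phi> k) = 0" by (rule zero_phi)
    hence "\<not> dist 0 (\<phi> k) < e" using e by blast
    thus "min e 1 \<le> norm (\<phi> k)" by auto
  qed (use e in auto)
qed

end

lemma ln_exp_plus_le:
  fixes x Y :: real assumes "x \<ge> 0" "Y \<ge> 0"
  shows "ln (exp x + Y) \<le> x + ln (1 + Y)"
proof -
  have "exp x + Y \<le> exp x * (1 + Y)"
    using assms mult_left_mono[of 1 "exp x" Y] by (simp add: algebra_simps)
  hence "ln (exp x + Y) \<le> ln (exp x * (1 + Y))"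
    using assms by (intro ln_mono) (auto intro: add_pos_nonneg)
  also have "\<dots> = x + ln (1 + Y)" using assms by (simp add: ln_mult)
  finally show ?thesis .
qed

locale thm17b = thm17 +
  fixes \<sigma> R0 \<delta> :: real
  assumes \<sigma>0: "0 \<le> \<sigma>" and \<sigma>1: "\<sigma> < 1" and R0: "R0 > 0"
    and gro: "\<And>w. norm w \<ge> R0 \<Longrightarrow> norm (g w) \<le> exp (norm w powr \<sigma>) + norm (f z)"
    and \<delta>0: "0 < \<delta>" and \<delta>1: "\<delta> \<le> 1" and \<delta>I: "\<And>k. k \<in> I \<Longrightarrow> norm (\<phi> k) \<ge> \<delta>"
begin

lemma prod_lower:
  assumes "finite K" "K \<subseteq> I" "\<forall>k\<in>K. norm (\<phi> k) \<le> r" "norm w = 3 * r"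
  shows "norm (\<Prod>k\<in>K. (1 - w / \<phi> k)) \<ge> 2 ^ card K"
proof -
  have fac: "norm (1 - w / \<phi> k) \<ge> 2" if "k \<in> K" for k
  proof -
    have pk: "norm (\<phi> k) > 0" using \<delta>I[of k] \<delta>0 that assms(2) by auto
    have "norm (\<phi> k) \<le> r" using assms(3) that by auto
    hence "3 * norm (\<phi> k) \<le> norm w" using assms(4) by simp
    hence "3 \<le> norm w / norm (\<phi> k)" using pk by (simp add: field_simps)
    hence "3 \<le> norm (w / \<phi> k)" by (simp add: norm_divide)
    moreover have "norm (w / \<phi> k) - 1 \<le> norm (1 - w / \<phi> k)"
      using norm_triangle_ineq2[of "w / \<phi> k" 1] by (simp add: norm_minus_commute)
    ultimately show ?thesis by linarith
  qed
  have "(2::real) ^ card K = (\<Prod>k\<in>K. 2)" by simp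
  also have "\<dots> \<le> (\<Prod>k\<in>K. norm (1 - w / \<phi> k))" by (intro prod_mono) (use fac in auto)
  also have "\<dots> = norm (\<Prod>k\<in>K. (1 - w / \<phi> k))" by (rule prod_norm)
  finally show ?thesis .
qed

lemma count1:
  assumes "finite K" "K \<subseteq> I" "\<forall>k\<in>K. norm (\<phi> k) \<le> r" "3 * r \<ge> R0"
  shows "norm c * 2 ^ card K \<le> exp ((3 * r) powr \<sigma>) + norm (f z)"
proof -
  have r: "r > 0" using assms(4) R0 by simp
  obtain H where H: "H holomorphic_on UNIV" "\<forall>w. g w = H w * (\<Prod>k\<in>K. (1 - w / \<phi> k))" "H 0 = g 0"
    using div_finite[OF assms(1) g_holo, of \<phi>] g0 c_nz card_le[OF assms(2)] by auto
  define B where "B = exp ((3 * r) powr \<sigma>) + norm (f z)"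
  have Hb: "norm (H w) \<le> B / 2 ^ card K" if "norm w = 3 * r" for w
  proof -
    have "norm (g w) \<le> B" unfolding B_def using gro[of w] that assms(4) by simp
    moreover have "norm (g w) = norm (H w) * norm (\<Prod>k\<in>K. (1 - w / \<phi> k))"
      using H(2) by (simp add: norm_mult)
    moreover have "norm (H w) * 2 ^ card K \<le> norm (H w) * norm (\<Prod>k\<in>K. (1 - w / \<phi> k))"
      by (intro mult_left_mono prod_lower[of K r w] assms that) auto
    ultimately show ?thesis by (simp add: field_simps)
  qed
  have "norm (H 0) \<le> B / 2 ^ card K"
    by (rule maxmod_disc[OF H(1), of "3 * r"]) (use r Hb in auto)
  thus ?thesis using H(3) g0 by (simp add: B_def field_simps)
qed

lemma count2:
  obtains \<alpha> \<beta> where "\<And>r K. r \<ge> 1 \<Longrightarrow> finite K \<Longrightarrow> K \<subseteq> I \<Longrightarrow> \<forall>k\<in>K. norm (\<phi> k) \<le> r \<Longrightarrow>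
      real (card K) \<le> \<alpha> * r powr \<sigma> + \<beta>"
proof -
  define Y where "Y = norm (f z)"
  define C where "C = \<bar>ln (1 + Y) - ln (norm c)\<bar>"
  define R1 where "R1 = max 1 (R0 / 3)"
  have core: "real (card K) \<le> (3 * s powr \<sigma> + C) / ln 2"
    if s: "s \<ge> R1" and K: "finite K" "K \<subseteq> I" "\<forall>k\<in>K. norm (\<phi> k) \<le> s" for s K
  proof -
    have s1: "s \<ge> 1" "3 * s \<ge> R0" using s by (auto simp: R1_def)
    have cK: "norm c * 2 ^ card K \<le> exp ((3 * s) powr \<sigma>) + Y"
      using count1[OF K s1(2)] by (simp add: Y_def)
    have cpos: "norm c > 0" using c_nz by simp
    have "ln (norm c * 2 ^ card K) \<le> ln (exp ((3 * s) powr \<sigma>) + Y)"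
      using cK cpos by (intro ln_mono) auto
    also have "\<dots> \<le> (3 * s) powr \<sigma> + ln (1 + Y)"
      by (rule ln_exp_plus_le) (auto simp: Y_def)
    finally have "ln (norm c) + real (card K) * ln 2 \<le> (3 * s) powr \<sigma> + ln (1 + Y)"
      using cpos by (simp add: ln_mult ln_realpow)
    hence "real (card K) * ln 2 \<le> (3 * s) powr \<sigma> + C" unfolding C_def by linarith
    moreover have "(3 * s) powr \<sigma> \<le> 3 * s powr \<sigma>"
    proof -
      have "(3 * s) powr \<sigma> = 3 powr \<sigma> * s powr \<sigma>" using s1 by (simp add: powr_mult)
      also have "3 powr \<sigma> \<le> 3 powr 1" using \<sigma>1 by (intro powr_mono) auto
      hence "3 powr \<sigma> * s powr \<sigma> \<le> 3 * s powr \<sigma>" by (intro mult_right_mono) auto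
      finally show ?thesis .
    qed
    ultimately have "real (card K) * ln 2 \<le> 3 * s powr \<sigma> + C" by linarith
    thus ?thesis by (simp add: field_simps)
  qed
  show ?thesis
  proof (rule that[of "3 / ln 2" "(3 * R1 powr \<sigma> + C) / ln 2"])
    fix r :: real and K assume r: "r \<ge> 1" and K: "finite K" "K \<subseteq> I" "\<forall>k\<in>K. norm (\<phi> k) \<le> r"
    have nn: "r powr \<sigma> \<ge> 0" "R1 powr \<sigma> \<ge> 0" "C \<ge> 0" by (auto simp: C_def)
    show "real (card K) \<le> 3 / ln 2 * r powr \<sigma> + (3 * R1 powr \<sigma> + C) / ln 2"
    proof (cases "r \<ge> R1")
      case True
      have "real (card K) \<le> (3 * r powr \<sigma> + C) / ln 2" by (rule core[OF True K])
      also have "\<dots> \<le> 3 / ln 2 * r powr \<sigma> + (3 * R1 powr \<sigma> + C) / ln 2"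
        using nn by (simp add: field_simps)
      finally show ?thesis .
    next
      case False
      have "real (card K) \<le> (3 * R1 powr \<sigma> + C) / ln 2"
        by (rule core[OF order.refl K(1,2)]) (use K(3) False in force)
      also have "\<dots> \<le> 3 / ln 2 * r powr \<sigma> + (3 * R1 powr \<sigma> + C) / ln 2"
        using nn by (simp add: field_simps)
      finally show ?thesis .
    qed
  qed
qed


lemma finite_disc: "finite {k\<in>I. norm (\<phi> k) \<le> r}"
proof (rule ccontr)
  assume inf: "infinite {k\<in>I. norm (\<phi> k) \<le> r}"
  obtain \<alpha> \<beta> where ab: "\<And>r K. r \<ge> 1 \<Longrightarrow> finite K \<Longrightarrow> K \<subseteq> I \<Longrightarrow> \<forall>k\<in>K. norm (\<phi> k) \<le> r \<Longrightarrow>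
      real (card K) \<le> \<alpha> * r powr \<sigma> + \<beta>" using count2 by blast
  define n where "n = nat \<lceil>\<alpha> * max r 1 powr \<sigma> + \<beta>\<rceil> + 1"
  obtain K where K: "K \<subseteq> {k\<in>I. norm (\<phi> k) \<le> r}" "finite K" "card K = n"
    using infinite_arbitrarily_large[OF inf] by blast
  have "real (card K) \<le> \<alpha> * max r 1 powr \<sigma> + \<beta>"
    by (rule ab) (use K in auto)
  moreover have "real n > \<alpha> * max r 1 powr \<sigma> + \<beta>" unfolding n_def by linarith
  ultimately show False using K(3) by simp
qed

lemma sum_bound:
  obtains T where "\<And>J. finite J \<Longrightarrow> J \<subseteq> I \<Longrightarrow> (\<Sum>k\<in>J. norm (inverse (\<phi> k))) \<le> T"
proof -
  obtain \<alpha> \<beta> where ab: "\<And>r K. r \<ge> 1 \<Longrightarrow> finite K \<Longrightarrow> K \<subseteq> I \<Longrightarrow> \<forall>k\<in>K. norm (\<phi> k) \<le> r \<Longrightarrow>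
      real (card K) \<le> \<alpha> * r powr \<sigma> + \<beta>" using count2 by blast
  define u where "u = (\<lambda>k m. (1/2::real) ^ m * (if norm (\<phi> k) \<le> 2 ^ m then 1 else 0))"
  define q where "q = (2::real) powr (\<sigma> - 1)"
  define v where "v = (\<lambda>m. \<alpha> * q ^ m + \<beta> * (1/2::real) ^ m)"
  have q: "0 < q" "q < 1" using \<sigma>1 by (auto simp: q_def powr_less_one)
  have su: "summable (u k)" for k
    by (rule summable_comparison_test[where g="\<lambda>m. (1/2::real)^m"])
       (auto simp: u_def intro!: summable_geometric)
  have sv: "summable v" unfolding v_def using q
    by (intro summable_add summable_mult summable_geometric) auto
  have A: "norm (inverse (\<phi> k)) \<le> (2 / \<delta>) * suminf (u k)" if k: "k \<in> I" for k
  proof -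
    define x where "x = norm (\<phi> k)"
    have x: "x \<ge> \<delta>" using \<delta>I[OF k] by (simp add: x_def)
    obtain m where "x < 2 ^ m" using real_arch_pow[of 2 x] by auto
    hence ex: "\<exists>m. x \<le> 2 ^ m" by (auto intro: less_imp_le)
    define m0 where "m0 = (LEAST m. x \<le> (2::real) ^ m)"
    have m0: "x \<le> 2 ^ m0" unfolding m0_def using ex by (rule LeastI_ex)
    have um: "u k m0 = (1/2) ^ m0" using m0 by (simp add: u_def x_def)
    have "u k m0 \<le> suminf (u k)"
      using sum_le_suminf[OF su, of "{m0}"] by (auto simp: u_def)
    hence le: "(1/2) ^ m0 \<le> suminf (u k)" using um by simp
    have "inverse x \<le> (2 / \<delta>) * (1/2) ^ m0"
    proof (cases m0)
      case 0
      have "inverse x \<le> inverse \<delta>" using x \<delta>0 by (intro le_imp_inverse_le) auto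
      also have "\<dots> \<le> 2 / \<delta>" using \<delta>0 by (simp add: field_simps)
      finally show ?thesis using 0 by simp
    next
      case (Suc m')
      have "\<not> x \<le> 2 ^ m'" using not_less_Least[of m' "\<lambda>m. x \<le> (2::real) ^ m"] Suc by (simp add: m0_def)
      hence "x > 2 ^ m'" by simp
      hence "inverse x \<le> inverse (2 ^ m')" by (intro le_imp_inverse_le) auto
      also have "\<dots> = 2 * (1/2) ^ m0" using Suc by (simp add: power_divide field_simps)
      also have "\<dots> \<le> (2 / \<delta>) * (1/2) ^ m0" using \<delta>0 \<delta>1 by (intro mult_right_mono) (auto simp: field_simps)
      finally show ?thesis .
    qed
    also have "\<dots> \<le> (2 / \<delta>) * suminf (u k)" using le \<delta>0 by (intro mult_left_mono) auto
    finally show ?thesis by (simp add: x_def norm_inverse)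
  qed
  have B: "(\<Sum>k\<in>J. u k m) \<le> v m" if J: "finite J" "J \<subseteq> I" for J m
  proof -
    have "(\<Sum>k\<in>J. u k m) = (1/2) ^ m * (\<Sum>k\<in>J. (if norm (\<phi> k) \<le> 2 ^ m then 1 else 0))"
      by (simp add: u_def sum_distrib_left)
    also have "(\<Sum>k\<in>J. (if norm (\<phi> k) \<le> 2 ^ m then 1 else 0)) = real (card {k\<in>J. norm (\<phi> k) \<le> 2 ^ m})"
      using J(1) by (simp add: sum.If_cases Int_def conj_commute)
    also have "\<dots> \<le> \<alpha> * (2 ^ m) powr \<sigma> + \<beta>"
      by (rule ab) (use J in auto)
    finally have "(\<Sum>k\<in>J. u k m) \<le> (1/2) ^ m * (\<alpha> * (2 ^ m) powr \<sigma> + \<beta>)"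
      by (simp add: mult_left_mono)
    also have "(1/2::real) ^ m * (2 ^ m) powr \<sigma> = q ^ m"
    proof -
      have "(2::real) ^ m = 2 powr real m" by (simp add: powr_realpow)
      have e1: "(1/2::real) ^ m = 2 powr (- real m)"
        using \<open>(2::real) ^ m = 2 powr real m\<close> by (simp add: powr_minus power_one_over inverse_eq_divide)
      have e2: "((2::real) ^ m) powr \<sigma> = 2 powr (real m * \<sigma>)"
        using \<open>(2::real) ^ m = 2 powr real m\<close> by (simp add: powr_powr)
      have "(1/2::real) ^ m * (2 ^ m) powr \<sigma> = 2 powr (- real m) * 2 powr (real m * \<sigma>)"
        by (simp only: e1 e2)
      also have "\<dots> = 2 powr ((\<sigma> - 1) * real m)" by (simp add: powr_add[symmetric] algebra_simps)
      also have "\<dots> = q ^ m" by (simp add: q_def powr_powr[symmetric] powr_realpow)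
      finally show ?thesis .
    qed
    hence "(1/2) ^ m * (\<alpha> * (2 ^ m) powr \<sigma> + \<beta>) = v m" by (simp add: v_def algebra_simps)
    finally show ?thesis .
  qed
  show ?thesis
  proof (rule that[of "(2 / \<delta>) * suminf v"])
    fix J assume J: "finite J" "J \<subseteq> I"
    have "(\<Sum>k\<in>J. norm (inverse (\<phi> k))) \<le> (\<Sum>k\<in>J. (2 / \<delta>) * suminf (u k))"
      using J A by (intro sum_mono) auto
    also have "\<dots> = (2 / \<delta>) * (\<Sum>k\<in>J. suminf (u k))" by (simp add: sum_distrib_left)
    also have "(\<Sum>k\<in>J. suminf (u k)) = (\<Sum>m. \<Sum>k\<in>J. u k m)" by (rule suminf_sum[symmetric]) (rule su)
    also have "(2 / \<delta>) * (\<Sum>m. \<Sum>k\<in>J. u k m) \<le> (2 / \<delta>) * suminf v"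
      using \<delta>0 by (intro mult_left_mono suminf_le) (use B J sv su in \<open>auto intro: summable_sum\<close>)
    finally show "(\<Sum>k\<in>J. norm (inverse (\<phi> k))) \<le> (2 / \<delta>) * suminf v" .
  qed
qed

end

lemma one_minus_ge_exp:
  fixes x :: real assumes "0 \<le> x" "x \<le> 1/2"
  shows "exp (- 2 * x) \<le> 1 - x"
proof -
  have "1 + 2 * x \<le> exp (2 * x)" by (rule exp_ge_add_one_self)
  hence "exp (- 2 * x) \<le> 1 / (1 + 2 * x)"
    using assms by (simp add: exp_minus field_simps)
  also have "\<dots> \<le> 1 - x" using assms mult_left_mono[of "x * 2" 1 x] by (simp add: field_simps)
  finally show ?thesis .
qed

lemma limit_aux:
  fixes \<sigma> C :: real assumes "\<sigma> < 1"
  shows "((\<lambda>R. 8 * ((4 * R) powr \<sigma> + C) / R) \<longlongrightarrow> 0) at_top"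
proof -
  have l1: "((\<lambda>R::real. R powr (\<sigma> - 1)) \<longlongrightarrow> 0) at_top"
    using assms by (intro tendsto_neg_powr filterlim_ident) auto
  have l2: "((\<lambda>R::real. C / R) \<longlongrightarrow> 0) at_top"
    by (intro tendsto_divide_0[OF tendsto_const] filterlim_at_top_imp_at_infinity filterlim_ident)
  have "((\<lambda>R. 8 * (4 powr \<sigma> * R powr (\<sigma> - 1) + C / R)) \<longlongrightarrow> 8 * (4 powr \<sigma> * 0 + 0)) at_top"
    by (intro tendsto_intros l1 l2)
  moreover have "eventually (\<lambda>R. 8 * (4 powr \<sigma> * R powr (\<sigma> - 1) + C / R) = 8 * ((4 * R) powr \<sigma> + C) / R) at_top"
    using eventually_gt_at_top[of "0::real"]
  proof eventually_elim
    case (elim R)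
    have "(4 * R) powr \<sigma> = 4 powr \<sigma> * R powr \<sigma>" using elim by (simp add: powr_mult)
    moreover have "R powr (\<sigma> - 1) = R powr \<sigma> / R" using elim by (simp add: powr_diff)
    ultimately show ?case using elim by (simp add: field_simps)
  qed
  ultimately show ?thesis by (simp add: tendsto_cong)
qed

context thm17b begin

lemma tail:
  assumes "\<eta> > 0"
  obtains F where "finite F" "F \<subseteq> I"
    "\<And>J. finite J \<Longrightarrow> J \<subseteq> I \<Longrightarrow> J \<inter> F = {} \<Longrightarrow> (\<Sum>k\<in>J. norm (inverse (\<phi> k))) \<le> \<eta>"
proof -
  obtain T where T: "\<And>J. finite J \<Longrightarrow> J \<subseteq> I \<Longrightarrow> (\<Sum>k\<in>J. norm (inverse (\<phi> k))) \<le> T"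
    using sum_bound by blast
  define X where "X = (\<lambda>J. \<Sum>k\<in>J. norm (inverse (\<phi> k))) ` {J. finite J \<and> J \<subseteq> I}"
  have ne: "X \<noteq> {}" unfolding X_def by auto
  have bdd: "bdd_above X" unfolding X_def bdd_above_def using T by blast
  have "Sup X - \<eta> < Sup X" using assms by simp
  then obtain x where x: "x \<in> X" "Sup X - \<eta> < x" using less_cSupE[OF _ ne] by blast
  then obtain F where F: "finite F" "F \<subseteq> I" "x = (\<Sum>k\<in>F. norm (inverse (\<phi> k)))"
    unfolding X_def by auto
  show ?thesis
  proof (rule that[OF F(1,2)])
    fix J assume J: "finite J" "J \<subseteq> I" "J \<inter> F = {}"
    have "(\<Sum>k\<in>J \<union> F. norm (inverse (\<phi> k))) \<le> Sup X"
      by (rule cSup_upper[OF _ bdd]) (use J F in \<open>auto simp: X_def\<close>)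
    moreover have "(\<Sum>k\<in>J \<union> F. norm (inverse (\<phi> k))) = (\<Sum>k\<in>J. norm (inverse (\<phi> k))) + x"
      using J F by (simp add: sum.union_disjoint)
    ultimately show "(\<Sum>k\<in>J. norm (inverse (\<phi> k))) \<le> \<eta>" using x(2) by linarith
  qed
qed

lemma H_nonzero:
  assumes H: "H holomorphic_on UNIV" "\<forall>w. g w = H w * (\<Prod>k\<in>Z. (1 - w / \<phi> k))" "H 0 = c"
     "\<forall>p. zorder H p = zorder g p - int (card {k\<in>Z. \<phi> k = p})"
    and Z: "Z \<subseteq> I" "\<And>k. k \<in> I \<Longrightarrow> \<phi> k = p \<Longrightarrow> k \<in> Z"
  shows "H p \<noteq> 0"
proof
  assume Ha: "H p = 0"
  hence ga: "g p = 0" using H(2) by simp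
  have "int (card {k\<in>Z. \<phi> k = p}) = zorder g p"
    by (rule card_exact) (use Z ga in auto)
  hence z0: "zorder H p = 0" using H(4) by simp
  have "frequently (\<lambda>w. H w \<noteq> 0) (at p)"
    using non_zero_neighbour_alt[OF H(1) open_UNIV connected_UNIV, of p 0] H(3) c_nz
    by (auto elim: eventually_mono intro: eventually_frequently)
  hence "zorder H p > 0" using zorder_pos_iff[OF H(1) open_UNIV, of p] Ha by auto
  thus False using z0 by simp
qed

end

context thm17b begin

lemma hadamard:
  assumes eps: "\<epsilon> > 0"
  obtains N0 where "\<And>N. N \<ge> N0 \<Longrightarrow> \<exists>G. G holomorphic_on UNIV \<and> G 0 = c \<and>
     (\<forall>w. g w = G w * (\<Prod>k\<in>{k\<in>I. k < N}. (1 - w / \<phi> k))) \<and>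
     (\<forall>w. norm w \<le> 1 \<longrightarrow> norm (G w - c) \<le> \<epsilon>)"
proof -
  have cpos: "norm c > 0" using c_nz by simp
  define \<theta> where "\<theta> = min (1/2) (\<epsilon> / (2 * norm c))"
  have \<theta>: "\<theta> > 0" "\<theta> \<le> 1/2" "\<theta> \<le> \<epsilon> / (2 * norm c)" using eps cpos by (auto simp: \<theta>_def)
  define \<eta> where "\<eta> = \<theta> / 64"
  have \<eta>: "\<eta> > 0" using \<theta> by (simp add: \<eta>_def)
  obtain F where F: "finite F" "F \<subseteq> I"
    "\<And>J. finite J \<Longrightarrow> J \<subseteq> I \<Longrightarrow> J \<inter> F = {} \<Longrightarrow> (\<Sum>k\<in>J. norm (inverse (\<phi> k))) \<le> \<eta>"
    using tail[OF \<eta>] by blast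
  define Y where "Y = norm (f z)"
  define C1 where "C1 = \<bar>ln (1 + Y) - ln (norm c)\<bar>"
  have ev: "eventually (\<lambda>R. 8 * ((4 * R) powr \<sigma> + (C1 + 1)) / R < \<theta> / 2) at_top"
    using limit_aux[OF \<sigma>1, of "C1 + 1"] \<theta>(1) by (intro order_tendstoD(2)) auto
  define RF where "RF = (\<Sum>k\<in>F. norm (\<phi> k))"
  obtain R where R: "R \<ge> 4" "4 * R \<ge> R0" "R \<ge> RF" "8 * ((4 * R) powr \<sigma> + (C1 + 1)) / R < \<theta> / 2"
  proof -
    from ev obtain M where M: "\<And>R. R \<ge> M \<Longrightarrow> 8 * ((4 * R) powr \<sigma> + (C1 + 1)) / R < \<theta> / 2"
      by (auto simp: eventually_at_top_linorder)
    show ?thesis by (rule that[of "max (max M 4) (max R0 RF)"]) (use M in auto)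
  qed
  have RFk: "norm (\<phi> k) \<le> 2 * R" if "k \<in> F" for k
  proof -
    have "norm (\<phi> k) \<le> RF" unfolding RF_def using F(1) that by (intro member_le_sum) auto
    thus ?thesis using R(1,3) by linarith
  qed
  define Z where "Z = {k\<in>I. norm (\<phi> k) \<le> 2 * R}"
  have Zfin: "finite Z" unfolding Z_def by (rule finite_disc)
  obtain N0 where N0: "Z \<subseteq> {..<N0}" using finite_nat_bounded[OF Zfin] by blast
  show ?thesis
  proof (rule that[of N0])
    fix N assume N: "N \<ge> N0"
    define KN where "KN = {k\<in>I. k < N}"
    have KNfin: "finite KN" unfolding KN_def by auto
    have ZK: "Z \<subseteq> KN" using N0 N by (auto simp: KN_def Z_def)
    have KNI: "KN \<subseteq> I" "Z \<subseteq> I" by (auto simp: KN_def Z_def)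
    obtain H where H: "H holomorphic_on UNIV" "\<forall>w. g w = H w * (\<Prod>k\<in>Z. (1 - w / \<phi> k))" "H 0 = g 0"
       "\<forall>p. zorder H p = zorder g p - int (card {k\<in>Z. \<phi> k = p})"
      using div_finite[OF Zfin g_holo, of \<phi>] g0 c_nz card_le[OF KNI(2)] by auto
    have H0: "H 0 = c" using H(3) g0 by simp
    have Hcard: "int (card {k\<in>KN - Z. \<phi> k = p}) \<le> zorder H p" for p
    proof -
      have "{k\<in>KN. \<phi> k = p} = {k\<in>Z. \<phi> k = p} \<union> {k\<in>KN - Z. \<phi> k = p}" using ZK by auto
      hence "card {k\<in>KN. \<phi> k = p} = card {k\<in>Z. \<phi> k = p} + card {k\<in>KN - Z. \<phi> k = p}"
        using KNfin Zfin by (subst card_Un_disjoint[symmetric]) auto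
      thus ?thesis using card_le[OF KNI(1), of p] H(4) by simp
    qed
    obtain G where G: "G holomorphic_on UNIV" "\<forall>w. H w = G w * (\<Prod>k\<in>KN - Z. (1 - w / \<phi> k))" "G 0 = H 0"
      using div_finite[of "KN - Z" H \<phi>] KNfin H(1) H0 c_nz Hcard by auto
    have G0: "G 0 = c" using G(3) H0 by simp
    have geq: "g w = G w * (\<Prod>k\<in>KN. (1 - w / \<phi> k))" for w
    proof -
      have "(\<Prod>k\<in>KN. (1 - w / \<phi> k)) = (\<Prod>k\<in>KN - Z. (1 - w / \<phi> k)) * (\<Prod>k\<in>Z. (1 - w / \<phi> k))"
        by (rule prod.subset_diff[OF ZK KNfin])
      thus ?thesis using H(2) G(2) by (simp add: mult_ac)
    qed
    have Hnz: "H p \<noteq> 0" if "norm p \<le> 2 * R" for p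
      by (rule H_nonzero[OF H(1,2) H0 H(4) KNI(2)]) (use that in \<open>auto simp: Z_def\<close>)
    have Gnz: "G p \<noteq> 0" if "norm p \<le> 2 * R" for p
      using Hnz[OF that] G(2) by auto
    define B4 where "B4 = exp ((4 * R) powr \<sigma>) + Y"
    have Hb: "norm (H w) \<le> B4" if "norm w \<le> 4 * R" for w
    proof (rule maxmod_disc[OF H(1), of "4 * R"])
      fix u :: complex assume u: "norm u = 4 * R"
      have P1: "norm (\<Prod>k\<in>Z. (1 - u / \<phi> k)) \<ge> 1"
      proof -
        have fac: "norm (1 - u / \<phi> k) \<ge> 1" if "k \<in> Z" for k
        proof -
          have pk: "norm (\<phi> k) > 0" using \<delta>I[of k] \<delta>0 that KNI by auto
          have "norm (\<phi> k) \<le> 2 * R" using that by (simp add: Z_def)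
          hence "2 * norm (\<phi> k) \<le> norm u" using u by simp
          hence "2 \<le> norm u / norm (\<phi> k)" using pk by (simp add: field_simps)
          hence "2 \<le> norm (u / \<phi> k)" by (simp add: norm_divide)
          moreover have "norm (u / \<phi> k) - 1 \<le> norm (1 - u / \<phi> k)"
            using norm_triangle_ineq2[of "u / \<phi> k" 1] by (simp add: norm_minus_commute)
          ultimately show ?thesis by linarith
        qed
        have "(1::real) = (\<Prod>k\<in>Z. 1)" by simp
        also have "\<dots> \<le> (\<Prod>k\<in>Z. norm (1 - u / \<phi> k))" by (intro prod_mono) (use fac in auto)
        also have "\<dots> = norm (\<Prod>k\<in>Z. (1 - u / \<phi> k))" by (rule prod_norm)
        finally show ?thesis .
      qed
      have "norm (g u) \<le> B4" unfolding B4_def Y_def using gro[of u] u R(2) by simp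
      moreover have "norm (g u) = norm (H u) * norm (\<Prod>k\<in>Z. (1 - u / \<phi> k))"
        using H(2) by (simp add: norm_mult)
      moreover have "norm (H u) * 1 \<le> norm (H u) * norm (\<Prod>k\<in>Z. (1 - u / \<phi> k))"
        by (intro mult_left_mono P1) auto
      ultimately show "norm (H u) \<le> B4" by linarith
    qed (use R(1) that in auto)
    have Plow: "norm (\<Prod>k\<in>KN - Z. (1 - w / \<phi> k)) \<ge> exp (- 2 * R * \<eta>)" if w: "norm w \<le> R" for w
    proof -
      define x where "x = (\<lambda>k. norm w * norm (inverse (\<phi> k)))"
      have xk: "0 \<le> x k" "x k \<le> 1/2" "1 - x k \<le> norm (1 - w / \<phi> k)" if k: "k \<in> KN - Z" for k
      proof -
        have kI: "k \<in> I" using k KNI by auto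
        have pk: "norm (\<phi> k) > 2 * R" using k kI by (auto simp: Z_def KN_def)
        show "0 \<le> x k" by (simp add: x_def)
        have "x k = norm w / norm (\<phi> k)" by (simp add: x_def norm_inverse divide_inverse)
        also have "\<dots> \<le> R / (2 * R)" using w pk R(1) by (intro frac_le) auto
        also have "\<dots> = 1/2" using R(1) by simp
        finally show "x k \<le> 1/2" .
        have "norm (w / \<phi> k) = x k" by (simp add: x_def norm_divide norm_inverse norm_mult divide_inverse)
        moreover have "1 - norm (w / \<phi> k) \<le> norm (1 - w / \<phi> k)"
          using norm_triangle_ineq2[of 1 "w / \<phi> k"] by simp
        ultimately show "1 - x k \<le> norm (1 - w / \<phi> k)" by simp
      qed
      have disj: "(KN - Z) \<inter> F = {}"
      proof -
        have "k \<in> Z" if "k \<in> F" for k using RFk[OF that] F(2) that by (auto simp: Z_def)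
        thus ?thesis by auto
      qed
      have sx: "(\<Sum>k\<in>KN - Z. x k) \<le> R * \<eta>"
      proof -
        have "(\<Sum>k\<in>KN - Z. x k) = norm w * (\<Sum>k\<in>KN - Z. norm (inverse (\<phi> k)))"
          by (simp add: x_def sum_distrib_left)
        also have "\<dots> \<le> R * \<eta>"
          using F(3)[of "KN - Z"] KNfin KNI disj w \<eta> R(1) by (intro mult_mono) (auto intro: sum_nonneg)
        finally show ?thesis .
      qed
      have "exp (- 2 * R * \<eta>) \<le> exp (- 2 * (\<Sum>k\<in>KN - Z. x k))" using sx by simp
      also have "\<dots> = (\<Prod>k\<in>KN - Z. exp (- 2 * x k))"
        using KNfin by (simp add: exp_sum[symmetric] sum_distrib_left)
      also have "\<dots> \<le> (\<Prod>k\<in>KN - Z. norm (1 - w / \<phi> k))"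
      proof (rule prod_mono)
        fix k assume k: "k \<in> KN - Z"
        show "0 \<le> exp (- 2 * x k) \<and> exp (- 2 * x k) \<le> norm (1 - w / \<phi> k)"
          using one_minus_ge_exp[OF xk(1,2)[OF k]] xk(3)[OF k] by auto
      qed
      also have "\<dots> = norm (\<Prod>k\<in>KN - Z. (1 - w / \<phi> k))" by (rule prod_norm)
      finally show ?thesis .
    qed
    show "\<exists>G. G holomorphic_on UNIV \<and> G 0 = c \<and>
     (\<forall>w. g w = G w * (\<Prod>k\<in>{k\<in>I. k < N}. (1 - w / \<phi> k))) \<and>
     (\<forall>w. norm w \<le> 1 \<longrightarrow> norm (G w - c) \<le> \<epsilon>)"
    proof (intro exI conjI allI impI)
      show "G holomorphic_on UNIV" by fact
      show "G 0 = c" by fact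
      show "g w = G w * (\<Prod>k\<in>{k\<in>I. k < N}. (1 - w / \<phi> k))" for w using geq[of w] by (simp add: KN_def)
      have B4pos: "B4 > 0" by (simp add: B4_def Y_def add_pos_nonneg)
      have Gb: "norm (G w) \<le> B4 * exp (2 * R * \<eta>)" if w: "norm w \<le> R" for w
      proof -
        have hw: "norm (H w) \<le> B4" using Hb[of w] w R(1) by simp
        have pl: "norm (\<Prod>k\<in>KN - Z. (1 - w / \<phi> k)) \<ge> exp (- 2 * R * \<eta>)" by (rule Plow[OF w])
        have "norm (H w) = norm (G w) * norm (\<Prod>k\<in>KN - Z. (1 - w / \<phi> k))"
          using G(2) by (simp add: norm_mult)
        moreover have "norm (G w) * exp (- 2 * R * \<eta>) \<le> norm (G w) * norm (\<Prod>k\<in>KN - Z. (1 - w / \<phi> k))"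
          using pl by (intro mult_left_mono) auto
        ultimately have "norm (G w) * exp (- 2 * R * \<eta>) \<le> B4"
          using hw by linarith
        thus ?thesis by (simp add: exp_minus field_simps)
      qed
      have Rpos: "R > 0" using R(1) by simp
      obtain l where l: "l holomorphic_on ball 0 R" "\<And>w. w \<in> ball 0 R \<Longrightarrow> G w = exp (l w)"
      proof (rule contractible_imp_holomorphic_log[of G "ball 0 R"])
        show "G holomorphic_on ball 0 R" using G(1) by (rule holomorphic_on_subset) auto
        show "contractible (ball (0::complex) R)" by (intro convex_imp_contractible convex_ball)
        show "G w \<noteq> 0" if "w \<in> ball 0 R" for w using Gnz[of w] that Rpos by auto
      qed blast
      define L where "L = (\<lambda>w. l w - l 0)"
      have Lh: "L holomorphic_on ball 0 R" unfolding L_def by (intro holomorphic_intros l(1))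
      have L0: "L 0 = 0" by (simp add: L_def)
      have 0: "(0::complex) \<in> ball 0 R" using Rpos by simp
      have GL: "G w = c * exp (L w)" if "w \<in> ball 0 R" for w
        using l(2)[OF that] l(2)[OF 0] G0 by (simp add: L_def exp_diff)
      define A where "A = (4 * R) powr \<sigma> + (C1 + 1) + 2 * R * \<eta>"
      have Apos: "A > 0" unfolding A_def C1_def using Rpos \<eta> by (intro add_nonneg_pos add_pos_nonneg) auto
      have ReL: "Re (L w) \<le> A" if w: "w \<in> ball 0 R" for w
      proof -
        have "exp (Re (L w)) = norm (G w) / norm c" using GL[OF w] cpos by (simp add: norm_mult)
        also have "\<dots> \<le> B4 * exp (2 * R * \<eta>) / norm c" using Gb[of w] w cpos by (intro divide_right_mono) auto
        finally have "Re (L w) \<le> ln (B4 * exp (2 * R * \<eta>) / norm c)"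
          using B4pos cpos by (subst ln_ge_iff) auto
        also have "\<dots> = ln B4 + 2 * R * \<eta> - ln (norm c)" using B4pos cpos by (simp add: ln_div ln_mult)
        also have "ln B4 \<le> (4 * R) powr \<sigma> + ln (1 + Y)" unfolding B4_def by (rule ln_exp_plus_le) (auto simp: Y_def)
        hence "ln B4 + 2 * R * \<eta> - ln (norm c) \<le> A" unfolding A_def C1_def by linarith
        finally show ?thesis .
      qed
      fix w :: complex assume w: "norm w \<le> 1"
      have wb: "w \<in> ball 0 R" using w R(1) by simp
      have "norm (L w) \<le> 8 * A / R" by (rule schwarz_bound[OF Lh R(1) L0 Apos ReL w])
      also have "8 * A / R = 8 * ((4 * R) powr \<sigma> + (C1 + 1)) / R + 16 * \<eta>"
        using Rpos by (simp add: A_def field_simps)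
      also have "\<dots> \<le> \<theta>"
      proof -
        have "\<And>Q. Q < \<theta> / 2 \<Longrightarrow> Q + 16 * (\<theta> / 64) \<le> \<theta>" using \<theta>(1) by linarith
        from this[OF R(4)] show ?thesis unfolding \<eta>_def .
      qed
      finally have Lw: "norm (L w) \<le> \<theta>" .
      have "norm (G w - c) = norm c * norm (exp (L w) - 1)" using GL[OF wb] by (simp add: algebra_simps norm_mult[symmetric])
      also have "norm (exp (L w) - 1) \<le> 3/2 * norm (L w)" using Lw \<theta>(2) by (intro norm_exp_bounds(2)) auto
      hence "norm c * norm (exp (L w) - 1) \<le> norm c * (3/2 * \<theta>)"
        using Lw cpos by (intro mult_left_mono) linarith+
      also have "\<dots> \<le> norm c * (3/2 * (\<epsilon> / (2 * norm c)))" using \<theta>(3) cpos by (intro mult_left_mono) auto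
      also have "\<dots> \<le> \<epsilon>" using cpos eps by (simp add: field_simps)
      finally show "norm (G w - c) \<le> \<epsilon>" .
    qed
  qed
qed

end

context thm17b begin

definition A' where "A' = Abs_fps (\<lambda>k. a k - (if k = 0 then f z else 0))"

lemma g_fps: "g has_fps_expansion A'"
proof (rule has_fps_expansionI, rule always_eventually, rule allI)
  fix u :: complex
  have s1: "(\<lambda>k. a k * u ^ k) sums f u" by (rule sums)
  have "(\<lambda>r. if r = 0 then (\<lambda>_. f z) r else 0) sums (\<lambda>_. f z) 0" by (rule sums_single)
  hence s2: "(\<lambda>k. (if k = 0 then f z else 0) * u ^ k) sums f z"
    by (rule back_subst[of "\<lambda>h. h sums _"]) (auto simp: fun_eq_iff)
  have "(\<lambda>k. a k * u ^ k - (if k = 0 then f z else 0) * u ^ k) sums (f u - f z)"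
    by (rule sums_diff[OF s1 s2])
  thus "(\<lambda>k. fps_nth A' k * u ^ k) sums g u"
    by (simp add: A'_def g_def algebra_simps)
qed

lemma A'_nth: "n \<ge> 1 \<Longrightarrow> fps_nth A' n = a n" by (simp add: A'_def)

lemma factor_fps: "(\<lambda>w. 1 - w / \<phi> k) has_fps_expansion (1 - fps_X * fps_const (inverse (\<phi> k)))"
proof -
  have "(\<lambda>w. 1 - w * inverse (\<phi> k)) has_fps_expansion (1 - fps_X * fps_const (inverse (\<phi> k)))"
    by (intro fps_expansion_intros)
  thus ?thesis by (simp add: divide_inverse)
qed

lemma coeff_est:
  assumes T: "\<And>J. finite J \<Longrightarrow> J \<subseteq> I \<Longrightarrow> (\<Sum>k\<in>J. norm (inverse (\<phi> k))) \<le> T"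
    and n: "n \<ge> 1" and KN: "finite KN" "KN \<subseteq> I"
    and G: "G holomorphic_on UNIV" "G 0 = c" "\<forall>w. g w = G w * (\<Prod>k\<in>KN. (1 - w / \<phi> k))"
    "\<forall>w. norm w \<le> 1 \<longrightarrow> norm (G w - c) \<le> \<epsilon>"
  shows "norm (a n - c * ((-1) ^ n * esym KN n (\<lambda>k. inverse (\<phi> k)))) \<le> real n * \<epsilon> * exp T"
proof -
  define FP where "FP = (\<Prod>k\<in>KN. (1 - fps_X * fps_const (inverse (\<phi> k))))"
  define FG where "FG = fps_expansion G 0"
  have hG: "G has_fps_expansion FG" unfolding FG_def using G(1) by (intro has_fps_expansion_fps_expansion) auto
  have hP: "(\<lambda>w. \<Prod>k\<in>KN. (1 - w / \<phi> k)) has_fps_expansion FP"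
    unfolding FP_def by (intro has_fps_expansion_prod factor_fps)
  have "(\<lambda>w. G w * (\<Prod>k\<in>KN. (1 - w / \<phi> k))) has_fps_expansion FG * FP"
    by (rule has_fps_expansion_mult[OF hG hP])
  moreover have "(\<lambda>w. G w * (\<Prod>k\<in>KN. (1 - w / \<phi> k))) = g" using G(3) by auto
  ultimately have "g has_fps_expansion FG * FP" by simp
  hence AFG: "A' = FG * FP" using g_fps fps_expansion_unique_complex by blast
  have FP_nth: "fps_nth FP j = (-1) ^ j * esym KN j (\<lambda>k. inverse (\<phi> k))" for j
    unfolding FP_def by (rule fps_prod_lin[OF KN(1)])
  have FPb: "norm (fps_nth FP j) \<le> exp T" for j
  proof -
    have "norm (fps_nth FP j) = norm (esym KN j (\<lambda>k. inverse (\<phi> k)))" by (simp add: FP_nth norm_mult norm_power)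
    also have "\<dots> \<le> exp (\<Sum>k\<in>KN. norm (inverse (\<phi> k)))" by (rule esym_norm_le[OF KN(1)])
    also have "\<dots> \<le> exp T" using T[OF KN] by simp
    finally show ?thesis .
  qed
  have FG0: "fps_nth FG 0 = c" using fps_nth_fps_expansion[OF hG, of 0] G(2) by simp
  have e0: "\<epsilon> \<ge> 0" using G(4)[rule_format, of 0] by (auto intro: order_trans[OF norm_ge_zero])
  have FGb: "norm (fps_nth FG i) \<le> \<epsilon>" if i: "i \<ge> 1" for i
  proof -
    have "(deriv ^^ i) (\<lambda>w. G w - c) 0 = (deriv ^^ i) G 0 - (deriv ^^ i) (\<lambda>w. c) 0"
      by (rule higher_deriv_diff) (use G(1) in auto)
    also have "(deriv ^^ i) (\<lambda>w. c) 0 = 0" using i by simp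
    finally have d: "(deriv ^^ i) G 0 = (deriv ^^ i) (\<lambda>w. G w - c) 0" by simp
    have "norm ((deriv ^^ i) (\<lambda>w. G w - c) 0) \<le> fact i * \<epsilon> / 1 ^ i"
    proof (rule Cauchy_inequality)
      show "(\<lambda>w. G w - c) holomorphic_on ball 0 1" using G(1) by (intro holomorphic_intros) (auto intro: holomorphic_on_subset)
      show "continuous_on (cball 0 1) (\<lambda>w. G w - c)"
        using G(1) by (intro continuous_intros holomorphic_on_imp_continuous_on) (auto intro: holomorphic_on_subset)
      show "norm (G x - c) \<le> \<epsilon>" if "norm (0 - x) = 1" for x using G(4) that by auto
    qed auto
    hence "norm ((deriv ^^ i) G 0) \<le> fact i * \<epsilon>" using d by simp
    have "fps_nth FG i = (deriv ^^ i) G 0 / fact i" by (rule fps_nth_fps_expansion[OF hG])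
    hence "norm (fps_nth FG i) = norm ((deriv ^^ i) G 0) / fact i" by (simp add: norm_divide)
    also have "\<dots> \<le> fact i * \<epsilon> / fact i" using \<open>norm ((deriv ^^ i) G 0) \<le> fact i * \<epsilon>\<close>
      by (intro divide_right_mono) auto
    finally show ?thesis by simp
  qed
  have "a n = fps_nth (FG * FP) n" using A'_nth[OF n] AFG by simp
  also have "\<dots> = (\<Sum>i=0..n. fps_nth FG i * fps_nth FP (n - i))" by (rule fps_mult_nth)
  also have "\<dots> = fps_nth FG 0 * fps_nth FP n + (\<Sum>i=Suc 0..n. fps_nth FG i * fps_nth FP (n - i))"
    by (subst sum.atLeast_Suc_atMost) auto
  finally have "a n - c * fps_nth FP n = (\<Sum>i=1..n. fps_nth FG i * fps_nth FP (n - i))" using FG0 by simp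
  hence "norm (a n - c * fps_nth FP n) \<le> (\<Sum>i=1..n. norm (fps_nth FG i * fps_nth FP (n - i)))"
    by (simp add: norm_sum)
  also have "\<dots> \<le> (\<Sum>i=1..n. \<epsilon> * exp T)"
    using FGb FPb e0 by (intro sum_mono) (auto simp: norm_mult intro!: mult_mono)
  also have "\<dots> = real n * \<epsilon> * exp T" by simp
  finally show ?thesis by (simp add: FP_nth)
qed

end

context thm17b begin

lemma esym_summable:
  assumes n: "n \<ge> 1"
  shows "(\<lambda>S. \<Prod>k\<in>S. inverse (\<phi> k)) summable_on {S. S \<subseteq> I \<and> card S = n}"
proof -
  obtain T where T: "\<And>J. finite J \<Longrightarrow> J \<subseteq> I \<Longrightarrow> (\<Sum>k\<in>J. norm (inverse (\<phi> k))) \<le> T"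
    using sum_bound by blast
  have "(\<lambda>S. norm (\<Prod>k\<in>S. inverse (\<phi> k))) summable_on {S. S \<subseteq> I \<and> card S = n}"
  proof (rule nonneg_bdd_above_summable_on)
    show "bdd_above (sum (\<lambda>S. norm (\<Prod>k\<in>S. inverse (\<phi> k))) ` {F. F \<subseteq> {S. S \<subseteq> I \<and> card S = n} \<and> finite F})"
      unfolding bdd_above_def
    proof (intro exI ballI)
      fix y assume "y \<in> sum (\<lambda>S. norm (\<Prod>k\<in>S. inverse (\<phi> k))) ` {F. F \<subseteq> {S. S \<subseteq> I \<and> card S = n} \<and> finite F}"
      then obtain F where F: "F \<subseteq> {S. S \<subseteq> I \<and> card S = n}" "finite F"
        and y: "y = (\<Sum>S\<in>F. norm (\<Prod>k\<in>S. inverse (\<phi> k)))" by auto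
      define K where "K = \<Union>F"
      have finS: "finite S" if "S \<in> F" for S
      proof -
        have "card S = n" using F(1) that by auto
        thus ?thesis using n card.infinite by fastforce
      qed
      have Kf: "finite K" unfolding K_def using F(2) finS by auto
      have KI: "K \<subseteq> I" unfolding K_def using F(1) by auto
      have "y = (\<Sum>S\<in>F. \<Prod>k\<in>S. norm (inverse (\<phi> k)))" by (simp add: y prod_norm)
      also have "\<dots> \<le> exp (\<Sum>k\<in>K. norm (inverse (\<phi> k)))"
        by (rule pow_sum_le_exp[OF Kf]) (auto simp: K_def)
      also have "\<dots> \<le> exp T" using T[OF Kf KI] by simp
      finally show "y \<le> exp T" .
    qed
  qed auto
  thus ?thesis by (rule abs_summable_summable)
qed

lemma esym_tendsto:
  assumes n: "n \<ge> 1"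
  shows "(\<lambda>N. esym {k\<in>I. k < N} n (\<lambda>k. inverse (\<phi> k))) \<longlonglongrightarrow>
           (\<Sum>\<^sub>\<infinity>S\<in>{S. S \<subseteq> I \<and> card S = n}. \<Prod>k\<in>S. inverse (\<phi> k))"
proof -
  define A where "A = {S. S \<subseteq> I \<and> card S = n}"
  define h where "h = (\<lambda>S. \<Prod>k\<in>S. inverse (\<phi> k))"
  define AN where "AN = (\<lambda>N. {S. S \<subseteq> {k\<in>I. k < N} \<and> card S = n})"
  have hs: "(sum h \<longlongrightarrow> infsum h A) (finite_subsets_at_top A)"
    using esym_summable[OF n] unfolding A_def h_def has_sum_def[symmetric]
    by (simp add: summable_iff_has_sum_infsum[symmetric])
  have fl: "filterlim AN (finite_subsets_at_top A) sequentially"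
    unfolding filterlim_finite_subsets_at_top
  proof (intro allI impI)
    fix X assume X: "finite X \<and> X \<subseteq> A"
    have finS: "finite S" if "S \<in> X" for S
    proof -
      have "card S = n" using X that by (auto simp: A_def)
      thus ?thesis using n card.infinite by fastforce
    qed
    have "finite (\<Union>X)" using X finS by auto
    then obtain M where M: "\<Union>X \<subseteq> {..<M}" using finite_nat_bounded by blast
    show "eventually (\<lambda>N. finite (AN N) \<and> X \<subseteq> AN N \<and> AN N \<subseteq> A) sequentially"
      unfolding eventually_sequentially
    proof (intro exI allI impI conjI)
      fix N assume N: "N \<ge> M"
      have "AN N \<subseteq> Pow {k\<in>I. k < N}" by (auto simp: AN_def)
      thus "finite (AN N)" by (rule finite_subset) auto
      show "X \<subseteq> AN N" using X M N by (auto simp: AN_def A_def)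
      show "AN N \<subseteq> A" by (auto simp: AN_def A_def)
    qed
  qed
  have "((\<lambda>N. sum h (AN N)) \<longlongrightarrow> infsum h A) sequentially"
    by (rule filterlim_compose[OF hs fl])
  thus ?thesis by (simp add: esym_def AN_def A_def h_def)
qed

lemma main:
  assumes n: "n \<ge> 1"
  shows "a n = (-1) ^ n * (f 0 - f z) * (\<Sum>\<^sub>\<infinity>S\<in>{S. S \<subseteq> I \<and> card S = n}. \<Prod>k\<in>S. inverse (\<phi> k))"
proof -
  obtain T where T: "\<And>J. finite J \<Longrightarrow> J \<subseteq> I \<Longrightarrow> (\<Sum>k\<in>J. norm (inverse (\<phi> k))) \<le> T"
    using sum_bound by blast
  define X where "X = (\<lambda>N. c * ((-1) ^ n * esym {k\<in>I. k < N} n (\<lambda>k. inverse (\<phi> k))))"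
  define E where "E = (\<Sum>\<^sub>\<infinity>S\<in>{S. S \<subseteq> I \<and> card S = n}. \<Prod>k\<in>S. inverse (\<phi> k))"
  have l1: "X \<longlonglongrightarrow> c * ((-1) ^ n * E)"
    unfolding X_def E_def by (intro tendsto_intros esym_tendsto[OF n])
  have l2: "X \<longlonglongrightarrow> a n"
  proof (rule LIMSEQ_I)
    fix r :: real assume r: "r > 0"
    define \<epsilon> where "\<epsilon> = r / (2 * (real n * exp T + 1))"
    have pos: "real n * exp T + 1 > 0" by (simp add: add_nonneg_pos)
    have \<epsilon>: "\<epsilon> > 0" using r pos by (simp add: \<epsilon>_def)
    obtain N0 where N0: "\<And>N. N \<ge> N0 \<Longrightarrow> \<exists>G. G holomorphic_on UNIV \<and> G 0 = c \<and>
       (\<forall>w. g w = G w * (\<Prod>k\<in>{k\<in>I. k < N}. (1 - w / \<phi> k))) \<and>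
       (\<forall>w. norm w \<le> 1 \<longrightarrow> norm (G w - c) \<le> \<epsilon>)"
      using hadamard[OF \<epsilon>] by blast
    show "\<exists>no. \<forall>N\<ge>no. norm (X N - a n) < r"
    proof (intro exI allI impI)
      fix N assume N: "N \<ge> N0"
      then obtain G where G: "G holomorphic_on UNIV" "G 0 = c"
        "\<forall>w. g w = G w * (\<Prod>k\<in>{k\<in>I. k < N}. (1 - w / \<phi> k))"
        "\<forall>w. norm w \<le> 1 \<longrightarrow> norm (G w - c) \<le> \<epsilon>" using N0 by blast
      have "norm (a n - X N) \<le> real n * \<epsilon> * exp T"
        unfolding X_def by (rule coeff_est[OF T n _ _ G]) auto
      also have "\<dots> = r / 2 * (real n * exp T / (real n * exp T + 1))"
        by (simp add: \<epsilon>_def field_simps)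
      also have "\<dots> \<le> r / 2 * 1"
      proof -
        have "real n * exp T / (real n * exp T + 1) \<le> 1" using pos by simp
        thus ?thesis using r by (intro mult_left_mono) auto
      qed
      also have "\<dots> < r" using r by simp
      finally show "norm (X N - a n) < r" by (simp add: norm_minus_commute)
    qed
  qed
  have "a n = c * ((-1) ^ n * E)" using LIMSEQ_unique[OF l2 l1] .
  thus ?thesis by (simp add: E_def c_def)
qed

end

theorem theorem17:
  fixes f :: "complex \<Rightarrow> complex" and a :: "nat \<Rightarrow> complex"
    and z :: complex and n :: nat and I :: "nat set" and \<phi> :: "nat \<Rightarrow> complex"
  assumes "f holomorphic_on UNIV"
    and "\<And>w. (\<lambda>k. a k * w ^ k) sums f w"
    and "entire_order f < 1"
    and "f z \<noteq> f 0"
    and "n \<ge> 1"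
    and "zeros_enum f z I \<phi>"
  shows "(\<lambda>S. \<Prod>k\<in>S. inverse (\<phi> k)) summable_on {S. S \<subseteq> I \<and> card S = n}
    \<and> a n = (-1) ^ n * (f 0 - f z) *
        (\<Sum>\<^sub>\<infinity>S\<in>{S. S \<subseteq> I \<and> card S = n}. \<Prod>k\<in>S. inverse (\<phi> k))"
proof -
  interpret t: thm17 f a z I \<phi>
    using assms(1,2,3,4,6) by unfold_locales
  obtain \<sigma> R0 where g1: "0 \<le> \<sigma>" "\<sigma> < 1" "R0 > 0"
    "\<And>w. norm w \<ge> R0 \<Longrightarrow> norm (t.g w) \<le> exp (norm w powr \<sigma>) + norm (f z)"
    using t.growth by blast
  obtain \<delta> where d1: "0 < \<delta>" "\<delta> \<le> 1" "\<And>k. k \<in> I \<Longrightarrow> norm (\<phi> k) \<ge> \<delta>"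
    using t.delta by blast
  interpret t2: thm17b f a z I \<phi> \<sigma> R0 \<delta>
    by unfold_locales (use g1 d1 in auto)
  show ?thesis using t2.esym_summable[OF assms(5)] t2.main[OF assms(5)] by blast
qed

end
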